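(* Let $p\ge5$ be a prime with $\left(\frac{-10}{p}\right)=-1$. Then for every integer $j$ with $0\le j\le p-1$ there exist integers $k,m$ with $0\le k,m\le p-1$ such that \[ 2\cdot \frac{3k^{2}+k}{2}+5 \cdot \frac{3m^{2}+m}{2}\equiv j \pmod p. \]
   Context: $\left(\frac{a}{p}\right)$ is the Legendre symbol. *)

theory Defs
  imports "HOL-Number_Theory.Number_Theory"
begin

end

theory Submission
  imports Defs
begin

lemma not_dvd_small:
  fixes p :: int
  assumes "prime p" "p \<ge> 5" "0 < n" "n < p"
  shows "\<not> p dvd n"
proof
  assume "p dvd n"
  hence "p \<le> n" using zdvd_imp_le assms(3) by blast
  thus False using assms(4) by simp
qed

lemma sq_inj:
  fixes p a :: int
  assumes "prime p" "\<not> p dvd a" "0 \<le> x" "0 \<le> y" "2*x < p" "2*y < p"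
    and "[a*x^2 = a*y^2] (mod p)"
  shows "x = y"
proof -
  have "p dvd a*x^2 - a*y^2" using assms(7) by (simp add: cong_iff_dvd_diff)
  also have "a*x^2 - a*y^2 = a*((x-y)*(x+y))" by (simp add: algebra_simps power2_eq_square)
  finally have "p dvd (x-y) \<or> p dvd (x+y)" using assms(1,2) by (simp add: prime_dvd_mult_int)
  thus ?thesis
  proof
    assume h: "p dvd x - y"
    show ?thesis
    proof (rule ccontr)
      assume "x \<noteq> y"
      hence "x - y \<noteq> 0" by simp
      hence "p \<le> \<bar>x - y\<bar>" using h by (metis dvd_abs_iff zdvd_imp_le zero_less_abs_iff)
      thus False using assms by linarith
    qed
  next
    assume h: "p dvd x + y"
    show ?thesis
    proof (rule ccontr)
      assume "x \<noteq> y"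
      hence "x + y > 0" using assms by linarith
      hence "p \<le> x + y" using h zdvd_imp_le by blast
      thus False using assms by linarith
    qed
  qed
qed

lemma two_squares:
  fixes p a b c :: int
  assumes "prime p" "p \<ge> 5" "\<not> p dvd a" "\<not> p dvd b"
  shows "\<exists>x y. [a*x^2 + b*y^2 = c] (mod p)"
proof -
  define h where "h = (p - 1) div 2"
  have odd: "odd p" using assms prime_odd_int by auto
  have hp: "2*h + 1 = p" using odd unfolding h_def
    by (metis oddE add_diff_cancel_right' nonzero_mult_div_cancel_left zero_neq_numeral)
  define I where "I = {0..h}"
  define A where "A = (\<lambda>x. (a*x^2) mod p) ` I"
  define B where "B = (\<lambda>y. (c - b*y^2) mod p) ` I"
  have inj1: "inj_on (\<lambda>x. (a*x^2) mod p) I"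
  proof (rule inj_onI)
    fix x y assume "x \<in> I" "y \<in> I" "(a*x^2) mod p = (a*y^2) mod p"
    thus "x = y" using sq_inj[OF assms(1,3), of x y] hp unfolding I_def cong_def by auto
  qed
  have inj2: "inj_on (\<lambda>y. (c - b*y^2) mod p) I"
  proof (rule inj_onI)
    fix x y assume xy: "x \<in> I" "y \<in> I" "(c - b*x^2) mod p = (c - b*y^2) mod p"
    hence "[c - b*x^2 = c - b*y^2] (mod p)" by (simp add: cong_def)
    hence "p dvd (c - b*x^2) - (c - b*y^2)" by (simp add: cong_iff_dvd_diff)
    also have "(c - b*x^2) - (c - b*y^2) = - (b*x^2 - b*y^2)" by simp
    finally have "p dvd b*x^2 - b*y^2" by (simp only: dvd_minus_iff)
    hence "[b*x^2 = b*y^2] (mod p)" by (simp add: cong_iff_dvd_diff)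
    thus "x = y" using sq_inj[OF assms(1,4), of x y] hp xy unfolding I_def by auto
  qed
  have cI: "card I = nat (h + 1)" unfolding I_def by simp
  have cA: "card A = nat (h+1)" using card_image[OF inj1] cI A_def by simp
  have cB: "card B = nat (h+1)" using card_image[OF inj2] cI B_def by simp
  have sub: "A \<union> B \<subseteq> {0..p-1}" unfolding A_def B_def using assms(2)
    by (auto simp: pos_mod_bound pos_mod_sign intro: zmod_le_nonneg_dividend)
  have "A \<inter> B \<noteq> {}"
  proof
    assume "A \<inter> B = {}"
    hence "card (A \<union> B) = card A + card B"
      by (rule card_Un_disjoint[rotated 2]) (auto simp: A_def B_def I_def)
    moreover have "card (A \<union> B) \<le> card {0..p-1}" by (rule card_mono) (use sub in auto)
    ultimately show False using cA cB hp assms(2) by simp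
  qed
  then obtain x y where "x \<in> I" "y \<in> I" "(a*x^2) mod p = (c - b*y^2) mod p"
    unfolding A_def B_def by auto
  hence "[a*x^2 = c - b*y^2] (mod p)" by (simp add: cong_def)
  hence "p dvd a*x^2 - (c - b*y^2)" by (simp add: cong_iff_dvd_diff)
  hence "[a*x^2 + b*y^2 = c] (mod p)" by (simp add: cong_iff_dvd_diff algebra_simps)
  thus ?thesis by blast
qed


lemma even_tri: "2 * ((3 * (k::int)^2 + k) div 2) = 3*k^2 + k"
proof -
  have e: "3*k^2+k = 2*k^2 + k*(k+1)" by (simp add: algebra_simps power2_eq_square)
  have "even (k*(k+1))" by simp
  hence "even (3*k^2 + k)" unfolding e by simp
  thus ?thesis by simp
qed

lemma exists_lin:
  fixes p :: int
  assumes "prime p" "p \<ge> 5"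
  shows "\<exists>k. 0 \<le> k \<and> k \<le> p - 1 \<and> [6*k + 1 = x] (mod p)"
proof -
  have "\<not> p dvd 2" "\<not> p dvd 3" using not_dvd_small[OF assms] assms by simp_all
  moreover have "(6::int) = 2*3" by simp
  ultimately have "\<not> p dvd 6" by (simp only: prime_dvd_mult_int[OF assms(1)]) simp
  hence "coprime 6 p" using assms(1) by (simp add: prime_imp_coprime coprime_commute)
  then obtain u where u: "[6*u = 1] (mod p)" using cong_solve_coprime_int by blast
  define k where "k = (u*(x-1)) mod p"
  have "[6*k + 1 = 6*(u*(x-1)) + 1] (mod p)" unfolding k_def
    by (intro cong_add cong_mult cong_refl) (simp add: cong_def)
  moreover have "[6*(u*(x-1)) + 1 = 1*(x-1) + 1] (mod p)"
    using u by (metis cong_add cong_mult cong_refl mult.assoc)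
  ultimately have "[6*k + 1 = x] (mod p)" using cong_trans by fastforce
  moreover have "0 \<le> k" "k \<le> p - 1" using assms(2) unfolding k_def by auto
  ultimately show ?thesis by blast
qed

theorem lemma3p18:
  fixes p :: int
  assumes "prime p" and "p \<ge> 5" and "Legendre (-10) p = -1"
  shows "\<forall>j. 0 \<le> j \<and> j \<le> p - 1 \<longrightarrow>
           (\<exists>k m. 0 \<le> k \<and> k \<le> p - 1 \<and> 0 \<le> m \<and> m \<le> p - 1 \<and>
              [2 * ((3 * k^2 + k) div 2) + 5 * ((3 * m^2 + m) div 2) = j] (mod p))"
proof (intro allI impI)
  fix j :: int
  have n2: "\<not> p dvd 2" and n3: "\<not> p dvd 3"
    using not_dvd_small[OF assms(1,2)] assms(2) by simp_all
  have n5: "\<not> p dvd 5"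
  proof
    assume "p dvd 5"
    hence "p \<le> 5" using zdvd_imp_le by simp
    hence "p = 5" using assms(2) by simp
    hence "[-10 = 0] (mod p)" by (simp add: cong_def)
    thus False using assms(3) by (simp add: Legendre_def)
  qed
  have "(24::int) = 2*(2*(2*3))" by simp
  hence n24: "\<not> p dvd 24" using n2 n3 by (simp only: prime_dvd_mult_int[OF assms(1)]) simp
  obtain x y where xy: "[2*x^2 + 5*y^2 = 24*j + 7] (mod p)"
    using two_squares[OF assms(1,2) n2 n5] by blast
  obtain k where k: "0 \<le> k" "k \<le> p - 1" "[6*k + 1 = x] (mod p)" using exists_lin[OF assms(1,2)] by blast
  obtain m where m: "0 \<le> m" "m \<le> p - 1" "[6*m + 1 = y] (mod p)" using exists_lin[OF assms(1,2)] by blast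
  define E where "E = 2 * ((3 * k^2 + k) div 2) + 5 * ((3 * m^2 + m) div 2)"
  define a where "a = (3 * k^2 + k) div 2"
  define b where "b = (3 * m^2 + m) div 2"
  have ha: "2*a = 3*k^2 + k" using even_tri[of k] unfolding a_def .
  have hb: "2*b = 3*m^2 + m" using even_tri[of m] unfolding b_def .
  have e1: "2*(6*k+1)^2 + 5*(6*m+1)^2 - 7 = 24*(3*k^2 + k) + 60*(3*m^2 + m)"
    by (simp add: algebra_simps power2_eq_square)
  have "24 * E = 2*(6*k+1)^2 + 5*(6*m+1)^2 - 7"
    unfolding e1 E_def a_def[symmetric] b_def[symmetric] ha[symmetric] hb[symmetric] by simp
  also have "[2*(6*k+1)^2 + 5*(6*m+1)^2 - 7 = 2*x^2 + 5*y^2 - 7] (mod p)"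
    using k(3) m(3) by (intro cong_diff cong_add cong_mult cong_pow cong_refl)
  also have "[2*x^2 + 5*y^2 - 7 = (24*j + 7) - 7] (mod p)"
    using xy by (intro cong_diff cong_refl)
  finally have "[24 * E = 24 * j] (mod p)" by simp
  moreover have "coprime 24 p" using n24 assms(1) by (simp add: prime_imp_coprime coprime_commute)
  ultimately have "[E = j] (mod p)" using cong_mult_lcancel by blast
  thus "\<exists>k m. 0 \<le> k \<and> k \<le> p - 1 \<and> 0 \<le> m \<and> m \<le> p - 1 \<and>
              [2 * ((3 * k^2 + k) div 2) + 5 * ((3 * m^2 + m) div 2) = j] (mod p)"
    using k m unfolding E_def by blast
qed

end
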